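(* Let $d\ge3$ be an integer and $0<\beta<\beta_{\mathrm{KS}}=\log\left(\frac{\sqrt{d-1}+1}{\sqrt{d-1}-1}\right)$. For $\alpha\in(-1,1)$ let $z=\sqrt{(1+e^{-2\beta})^2-\alpha^2(1-e^{-2\beta})^2}$, \begin{align*} G(\alpha,\beta)&=2\log2-\log\big((1+e^{-2\beta})(1-e^{-2\beta})^2\big)-(1+\alpha)\log(1+\alpha)-(1-\alpha)\log(1-\alpha)\\ &\quad+\frac{1+\alpha}{2}\log\Big((1+e^{-2\beta})^2+\alpha(1-e^{-2\beta})^2-2e^{-\beta}z\Big)+\frac{1-\alpha}{2}\log\Big((1+e^{-2\beta})^2-\alpha(1-e^{-2\beta})^2-2e^{-\beta}z\Big), \end{align*} and \[ f_d(\alpha,\beta)=\log2+H\!\left(\frac{1+\alpha}{2}\right)-\frac d2\,G(\alpha,\beta), \] where $H(p)=-p\log p-(1-p)\log(1-p)$. Then $\arg\max_{-1<\alpha<1}f_d(\alpha,\beta)=0$. *)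

theory Defs
  imports Complex_Main
begin

definition beta_KS :: "nat \<Rightarrow> real" where
  "beta_KS d = ln ((sqrt (real d - 1) + 1) / (sqrt (real d - 1) - 1))"

definition binent :: "real \<Rightarrow> real" where
  "binent p = - p * ln p - (1 - p) * ln (1 - p)"

definition zfun :: "real \<Rightarrow> real \<Rightarrow> real" where
  "zfun \<alpha> \<beta> = sqrt ((1 + exp (-2*\<beta>))^2 - \<alpha>^2 * (1 - exp (-2*\<beta>))^2)"

definition Gfun :: "real \<Rightarrow> real \<Rightarrow> real" where
  "Gfun \<alpha> \<beta> =
     2 * ln 2 - ln ((1 + exp (-2*\<beta>)) * (1 - exp (-2*\<beta>))^2)
     - (1 + \<alpha>) * ln (1 + \<alpha>) - (1 - \<alpha>) * ln (1 - \<alpha>)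
     + (1 + \<alpha>) / 2 * ln ((1 + exp (-2*\<beta>))^2 + \<alpha> * (1 - exp (-2*\<beta>))^2
                              - 2 * exp (-\<beta>) * zfun \<alpha> \<beta>)
     + (1 - \<alpha>) / 2 * ln ((1 + exp (-2*\<beta>))^2 - \<alpha> * (1 - exp (-2*\<beta>))^2
                              - 2 * exp (-\<beta>) * zfun \<alpha> \<beta>)"

definition fd :: "nat \<Rightarrow> real \<Rightarrow> real \<Rightarrow> real" where
  "fd d \<alpha> \<beta> = ln 2 + binent ((1 + \<alpha>) / 2) - real d / 2 * Gfun \<alpha> \<beta>"

end

theory Submission
  imports Defs
begin

lemma key_pow:
  fixes u :: real
  shows "u \<ge> 0 \<Longrightarrow> real n * u < 1 \<Longrightarrow> (1+u)^n * (1 - real n * u) \<le> (1-u)^n * (1 + real n * u)"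
proof (induction n)
  case 0 then show ?case by simp
next
  case (Suc n)
  define a where "a = real n * u"
  have a0: "a \<ge> 0" using Suc.prems a_def by simp
  have au: "a + u < 1" using Suc.prems a_def by (simp add: algebra_simps)
  have "real n * u < 1" using Suc.prems by (simp add: algebra_simps)
  then have IH: "(1+u)^n * (1 - a) \<le> (1-u)^n * (1 + a)" using Suc.IH Suc.prems a_def by simp
  have k: "(1+a)*(1+u)*(1-a-u) \<le> (1-u)*(1+a+u)*(1-a)"
  proof -
    have "(1-u)*(1+a+u)*(1-a) - (1+a)*(1+u)*(1-a-u) = 2*a*a*u + 2*a*u*u" by (simp add: algebra_simps)
    moreover have "2*a*a*u + 2*a*u*u \<ge> 0" using a0 Suc.prems by simp
    ultimately show ?thesis by linarith
  qed
  have p1: "(1+u)^n \<ge> 0" "(1-u)^n \<ge> 0" using Suc.prems au a0 by auto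
  have "(1+u)^(Suc n) * (1 - (a+u)) * (1 - a) = ((1+u)^n * (1-a)) * ((1+u)*(1-a-u))" by (simp add: algebra_simps)
  also have "\<dots> \<le> ((1-u)^n * (1+a)) * ((1+u)*(1-a-u))"
    by (rule mult_right_mono[OF IH]) (use Suc.prems au in auto)
  also have "\<dots> = (1-u)^n * ((1+a)*(1+u)*(1-a-u))" by (simp add: algebra_simps)
  also have "\<dots> \<le> (1-u)^n * ((1-u)*(1+a+u)*(1-a))" by (rule mult_left_mono[OF k p1(2)])
  also have "\<dots> = (1-u)^(Suc n) * (1 + (a+u)) * (1-a)" by (simp add: algebra_simps)
  finally have "(1+u)^(Suc n) * (1 - (a+u)) * (1 - a) \<le> (1-u)^(Suc n) * (1 + (a+u)) * (1-a)" .
  moreover have "1 - a > 0" using au Suc.prems by linarith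
  ultimately have "(1+u)^(Suc n) * (1 - (a+u)) \<le> (1-u)^(Suc n) * (1 + (a+u))"
    by (simp add: mult_le_cancel_right)
  then show ?case by (simp add: a_def algebra_simps)
qed

lemma frac_mono:
  fixes a b :: real
  assumes "0 \<le> a" "a < b" "b < 1"
  shows "(1+a)/(1-a) < (1+b)/(1-b)"
proof -
  have "(1+a)*(1-b) < (1+b)*(1-a)" using assms by (simp add: algebra_simps)
  then show ?thesis using assms by (simp add: divide_simps)
qed

lemma rho_sigma:
  fixes t w v :: real
  assumes t: "0 < t" "t < 1" and vw: "0 < v" "v < w" "t * w < v"
    and nc: "real n * ((1-t)/(1+t))^2 < 1"
  shows "((w+t*v)/(v+t*w))^n < (w-t*v)/(v-t*w)"
proof -
  define c where "c = ((1-t)/(1+t))^2"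
  define u' where "u' = (w-v)*(1+t)/((w+v)*(1-t))"
  define u where "u = c * u'"
  have q: "(1-t)/(1+t) > 0" "(1-t)/(1+t) < 1" using t by (auto simp: field_simps)
  have c0: "c > 0" "c < 1" using q by (auto simp: c_def power_less_one_iff)
  have u'0: "u' > 0" using t vw by (auto simp: u'_def)
  have "(w-v)*(1+t) < (w+v)*(1-t)" using vw by (simp add: algebra_simps)
  moreover have "(w+v)*(1-t) > 0" using t vw by simp
  ultimately have u'1: "u' < 1" by (simp add: u'_def)
  have nu: "real n * u < u'" 
  proof -
    have "real n * u = (real n * c) * u'" by (simp add: u_def)
    also have "\<dots> < 1 * u'" using nc c_def u'0 by (intro mult_strict_right_mono) auto
    finally show ?thesis by simp
  qed
  have u0: "u \<ge> 0" using c0 u'0 by (simp add: u_def)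
  have ue: "u = (w-v)*(1-t)/((w+v)*(1+t))"
  proof -
    have nz: "1-t \<noteq> 0" "1+t \<noteq> 0" "w+v \<noteq> 0" using t vw by auto
    show ?thesis unfolding u_def u'_def c_def power_divide
      using nz by (simp add: power2_eq_square divide_simps)
  qed
  have D: "(w+v)*(1+t) > 0" using t vw by simp
  have e1: "1 + u = 2*(w+t*v)/((w+v)*(1+t))" using D unfolding ue
    by (simp add: field_simps)
  have e2: "1 - u = 2*(v+t*w)/((w+v)*(1+t))" using D unfolding ue
    by (simp add: field_simps)
  have rho: "(w+t*v)/(v+t*w) = (1+u)/(1-u)"
  proof -
    have "v+t*w > 0" using t vw by (simp add: add_pos_pos)
    have g: "\<And>a b D::real. D > 0 \<Longrightarrow> b > 0 \<Longrightarrow> (2*a/D)/(2*b/D) = a/b" by simp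
    show ?thesis unfolding e1 e2 by (rule g[OF D \<open>v+t*w > 0\<close>, symmetric])
  qed
  have sig: "(w-t*v)/(v-t*w) = (1+u')/(1-u')"
  proof -
    have D': "(w+v)*(1-t) > 0" using t vw by simp
    have f1: "1 + u' = 2*(w-t*v)/((w+v)*(1-t))" using D' unfolding u'_def
      by (simp add: field_simps)
    have f2: "1 - u' = 2*(v-t*w)/((w+v)*(1-t))" using D' unfolding u'_def
      by (simp add: field_simps)
    have "v-t*w > 0" using vw by simp
    have g: "\<And>a b D::real. D > 0 \<Longrightarrow> b > 0 \<Longrightarrow> (2*a/D)/(2*b/D) = a/b" by simp
    show ?thesis unfolding f1 f2 by (rule g[OF D' \<open>v-t*w > 0\<close>, symmetric])
  qed
  have u1: "u < 1" unfolding u_def using mult_strict_mono[of c 1 u' 1] c0 u'0 u'1 by simp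
  have "((1+u)/(1-u))^n = (1+u)^n/(1-u)^n" by (simp add: power_divide)
  also have "\<dots> \<le> (1 + real n*u)/(1 - real n*u)"
    using key_pow[OF u0, of n] nu u'1 u1 by (simp add: divide_simps mult.commute)
  also have "\<dots> < (1+u')/(1-u')"
    using frac_mono[of "real n * u" u'] nu u'1 u0 by simp
  finally show ?thesis using rho sig by simp
qed

lemma G_eq:
  fixes t \<alpha> \<beta> :: real
  assumes t: "t = exp (-\<beta>)" and b: "0 < \<beta>" and a: "-1 < \<alpha>" "\<alpha> < 1"
  defines "A \<equiv> 1 + t^2" and "B \<equiv> 1 - t^2"
  defines "w \<equiv> sqrt (A + \<alpha>*B)" and "v \<equiv> sqrt (A - \<alpha>*B)"
  shows "Gfun \<alpha> \<beta> = 2*ln 2 + ln A - ((1+\<alpha>)*ln(w+t*v) + (1-\<alpha>)*ln(v+t*w))"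
proof -
  have t0: "0 < t" "t < 1" using b t by auto
  have e2: "exp (-2*\<beta>) = t^2" unfolding t by (simp add: exp_double[symmetric] power2_eq_square exp_add[symmetric])
  have A0: "A > 0" and B0: "B > 0" using t0 by (auto simp: A_def B_def power_less_one_iff add_pos_nonneg)
  have AB: "A > B" using t0 by (simp add: A_def B_def)
  have ap: "A + \<alpha>*B > 0" "A - \<alpha>*B > 0"
  proof -
    have "\<bar>\<alpha>*B\<bar> < B" using a B0 by (simp add: abs_mult abs_less_iff)
    then show "A + \<alpha>*B > 0" "A - \<alpha>*B > 0" using AB by linarith+
  qed
  have w2: "w^2 = A + \<alpha>*B" and v2: "v^2 = A - \<alpha>*B" using ap by (simp_all add: w_def v_def)
  have w0: "w > 0" and v0: "v > 0" using ap by (simp_all add: w_def v_def)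
  have z: "zfun \<alpha> \<beta> = w * v"
  proof -
    have "(1 + exp (-2*\<beta>))^2 - \<alpha>^2 * (1 - exp (-2*\<beta>))^2 = (A + \<alpha>*B) * (A - \<alpha>*B)"
      unfolding e2 A_def B_def by (simp add: algebra_simps power2_eq_square)
    then show ?thesis unfolding zfun_def w_def v_def by (simp add: real_sqrt_mult)
  qed
  have ABt: "A*B = 1 - t^4" by (simp add: A_def B_def algebra_simps power2_eq_square power4_eq_xxxx)
  have m1: "(w - t*v)*(w + t*v) = A*B*(1+\<alpha>)"
  proof -
    have "(w - t*v)*(w + t*v) = w^2 - t^2*v^2" by (simp add: algebra_simps power2_eq_square)
    also have "\<dots> = A*B*(1+\<alpha>)" unfolding w2 v2 A_def B_def by (simp add: algebra_simps power2_eq_square)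
    finally show ?thesis .
  qed
  have m2: "(v - t*w)*(v + t*w) = A*B*(1-\<alpha>)"
  proof -
    have "(v - t*w)*(v + t*w) = v^2 - t^2*w^2" by (simp add: algebra_simps power2_eq_square)
    also have "\<dots> = A*B*(1-\<alpha>)" unfolding w2 v2 A_def B_def by (simp add: algebra_simps power2_eq_square)
    finally show ?thesis .
  qed
  have pw: "w + t*v > 0" "v + t*w > 0" using w0 v0 t0 by (simp_all add: add_pos_pos)
  have pos1: "A*B*(1+\<alpha>) > 0" "A*B*(1-\<alpha>) > 0" using A0 B0 a by simp_all
  have mw: "w - t*v > 0"
    using m1 pos1(1) pw(1) by (metis zero_less_mult_pos2)
  have mv: "v - t*w > 0"
    using m2 pos1(2) pw(2) by (metis zero_less_mult_pos2)
  have P1: "(1 + exp (-2*\<beta>))^2 + \<alpha> * (1 - exp (-2*\<beta>))^2 - 2 * exp (-\<beta>) * zfun \<alpha> \<beta> = (w - t*v)^2"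
  proof -
    have "(w - t*v)^2 = w^2 - 2*t*(w*v) + t^2*v^2" by (simp add: algebra_simps power2_eq_square)
    also have "\<dots> = (1 + t^2)^2 + \<alpha> * (1 - t^2)^2 - 2 * t * (w*v)"
      unfolding w2 v2 A_def B_def by (simp add: algebra_simps power2_eq_square)
    finally show ?thesis unfolding e2 z t[symmetric] by simp
  qed
  have P2: "(1 + exp (-2*\<beta>))^2 - \<alpha> * (1 - exp (-2*\<beta>))^2 - 2 * exp (-\<beta>) * zfun \<alpha> \<beta> = (v - t*w)^2"
  proof -
    have "(v - t*w)^2 = v^2 - 2*t*(w*v) + t^2*w^2" by (simp add: algebra_simps power2_eq_square)
    also have "\<dots> = (1 + t^2)^2 - \<alpha> * (1 - t^2)^2 - 2 * t * (w*v)"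
      unfolding w2 v2 A_def B_def by (simp add: algebra_simps power2_eq_square)
    finally show ?thesis unfolding e2 z t[symmetric] by simp
  qed
  have L1: "ln ((w - t*v)^2) = 2*(ln A + ln B + ln (1+\<alpha>) - ln (w+t*v))"
  proof -
    have "w - t*v = A*B*(1+\<alpha>)/(w+t*v)" using m1 pw by (simp add: field_simps)
    then have "ln (w - t*v) = ln A + ln B + ln (1+\<alpha>) - ln (w+t*v)"
      using A0 B0 a pw by (simp add: ln_div ln_mult)
    then show ?thesis using mw by (simp add: ln_realpow)
  qed
  have L2: "ln ((v - t*w)^2) = 2*(ln A + ln B + ln (1-\<alpha>) - ln (v+t*w))"
  proof -
    have "v - t*w = A*B*(1-\<alpha>)/(v+t*w)" using m2 pw by (simp add: field_simps)
    then have "ln (v - t*w) = ln A + ln B + ln (1-\<alpha>) - ln (v+t*w)"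
      using A0 B0 a pw by (simp add: ln_div ln_mult)
    then show ?thesis using mv by (simp add: ln_realpow)
  qed
  have L0: "ln ((1 + exp (-2*\<beta>)) * (1 - exp (-2*\<beta>))^2) = ln A + 2 * ln B"
    unfolding e2 using A0 B0 by (simp add: A_def[symmetric] B_def[symmetric] ln_mult ln_realpow)
  show ?thesis unfolding Gfun_def P1 P2 L1 L2 L0
    by (simp add: field_simps)
qed

lemma chi_deriv:
  fixes t \<alpha> :: real
  assumes t0: "0 < t" "t < 1" and a: "-1 < \<alpha>" "\<alpha> < 1"
  defines "A \<equiv> 1 + t^2" and "B \<equiv> 1 - t^2"
  defines "w \<equiv> \<lambda>x. sqrt (A + x*B)" and "v \<equiv> \<lambda>x. sqrt (A - x*B)"
  shows "((\<lambda>x. (1+x)*ln(w x + t*v x) + (1-x)*ln(v x + t*w x)) has_real_derivative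
           (ln(w \<alpha> + t*v \<alpha>) - ln(v \<alpha> + t*w \<alpha>))) (at \<alpha>)"
proof -
  have A0: "A > 0" and B0: "B > 0" using t0 by (auto simp: A_def B_def power_less_one_iff add_pos_nonneg)
  have AB: "A > B" using t0 by (simp add: A_def B_def)
  have ap: "A + \<alpha>*B > 0" "A - \<alpha>*B > 0"
  proof -
    have "\<bar>\<alpha>*B\<bar> < B" using a B0 by (simp add: abs_mult abs_less_iff)
    then show "A + \<alpha>*B > 0" "A - \<alpha>*B > 0" using AB by linarith+
  qed
  define W where "W = w \<alpha>"
  define V where "V = v \<alpha>"
  have W2: "W^2 = A + \<alpha>*B" and V2: "V^2 = A - \<alpha>*B" using ap by (simp_all add: w_def v_def W_def V_def)
  have W0: "W > 0" and V0: "V > 0" using ap by (simp_all add: w_def v_def W_def V_def)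
  have Dw: "(w has_real_derivative B/(2*W)) (at \<alpha>)"
  proof -
    have "((\<lambda>x. sqrt (A + x*B)) has_real_derivative (inverse (sqrt (A + \<alpha>*B)) / 2) * (0 + 1*B)) (at \<alpha>)"
      by (rule DERIV_chain2[where f=sqrt and g="\<lambda>x. A + x*B", OF DERIV_real_sqrt[OF ap(1)]]) (auto intro!: derivative_eq_intros)
    then show ?thesis unfolding w_def W_def by (simp add: divide_simps mult.commute)
  qed
  have Dv: "(v has_real_derivative -B/(2*V)) (at \<alpha>)"
  proof -
    have "((\<lambda>x. sqrt (A - x*B)) has_real_derivative (inverse (sqrt (A - \<alpha>*B)) / 2) * (0 - 1*B)) (at \<alpha>)"
      by (rule DERIV_chain2[where f=sqrt and g="\<lambda>x. A - x*B", OF DERIV_real_sqrt[OF ap(2)]]) (auto intro!: derivative_eq_intros)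
    then show ?thesis unfolding v_def V_def by (simp add: divide_simps mult.commute)
  qed
  have pw: "W + t*V > 0" "V + t*W > 0" using W0 V0 t0 by (simp_all add: add_pos_pos)
  have D1: "((\<lambda>x. w x + t*v x) has_real_derivative B/(2*W) + t*(-B/(2*V))) (at \<alpha>)"
    by (rule DERIV_add, rule Dw, rule DERIV_cmult, rule Dv)
  have D2: "((\<lambda>x. v x + t*w x) has_real_derivative -B/(2*V) + t*(B/(2*W))) (at \<alpha>)"
    by (rule DERIV_add, rule Dv, rule DERIV_cmult, rule Dw)
  have L1: "((\<lambda>x. ln (w x + t*v x)) has_real_derivative (B/(2*W) + t*(-B/(2*V))) / (W + t*V)) (at \<alpha>)"
    using DERIV_chain2[where f=ln and g="\<lambda>x. w x + t*v x", OF DERIV_ln[OF pw(1)[unfolded W_def V_def]] D1[unfolded W_def V_def]] unfolding W_def V_def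
    by (simp add: divide_simps mult.commute)
  have L2: "((\<lambda>x. ln (v x + t*w x)) has_real_derivative (-B/(2*V) + t*(B/(2*W))) / (V + t*W)) (at \<alpha>)"
    using DERIV_chain2[where f=ln and g="\<lambda>x. v x + t*w x", OF DERIV_ln[OF pw(2)[unfolded W_def V_def]] D2[unfolded W_def V_def]] unfolding W_def V_def
    by (simp add: divide_simps mult.commute)
  have P1: "((\<lambda>x. 1 + x) has_real_derivative 1) (at \<alpha>)" by (auto intro!: derivative_eq_intros)
  have P2: "((\<lambda>x. 1 - x) has_real_derivative -1) (at \<alpha>)" by (auto intro!: derivative_eq_intros)
  note F = DERIV_add[OF DERIV_mult[OF P1 L1] DERIV_mult[OF P2 L2]]
  have m1: "(1+\<alpha>) = (W - t*V)*(W + t*V)/(A*B)"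
  proof -
    have "(W - t*V)*(W + t*V) = W^2 - t^2*V^2" by (simp add: algebra_simps power2_eq_square)
    also have "\<dots> = A*B*(1+\<alpha>)" unfolding W2 V2 A_def B_def by (simp add: algebra_simps power2_eq_square)
    finally show ?thesis using A0 B0 by simp
  qed
  have m2: "(1-\<alpha>) = (V - t*W)*(V + t*W)/(A*B)"
  proof -
    have "(V - t*W)*(V + t*W) = V^2 - t^2*W^2" by (simp add: algebra_simps power2_eq_square)
    also have "\<dots> = A*B*(1-\<alpha>)" unfolding W2 V2 A_def B_def by (simp add: algebra_simps power2_eq_square)
    finally show ?thesis using A0 B0 by simp
  qed
  have Z: "(1+\<alpha>) * ((B/(2*W) + t*(-B/(2*V))) / (W + t*V)) + (1-\<alpha>) * ((-B/(2*V) + t*(B/(2*W))) / (V + t*W)) = 0"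
  proof -
    have s1: "B/(2*W) + t*(-B/(2*V)) = B*(V - t*W)/(2*W*V)" using W0 V0 by (simp add: field_simps)
    have s2: "-B/(2*V) + t*(B/(2*W)) = B*(-(W - t*V))/(2*W*V)" using W0 V0 by (simp add: field_simps)
    have g1: "\<And>x c y D::real. c \<noteq> 0 \<Longrightarrow> (x*c/(A*B)) * ((B*y/D)/c) = x*y/(A*D)"
      using B0 by (simp add: field_simps)
    have e1: "(1+\<alpha>) * ((B/(2*W) + t*(-B/(2*V))) / (W + t*V)) = (W - t*V)*(V - t*W)/(A*(2*W*V))"
      unfolding s1 m1 by (rule g1) (use pw in simp)
    have e2: "(1-\<alpha>) * ((-B/(2*V) + t*(B/(2*W))) / (V + t*W)) = (V - t*W)*(-(W - t*V))/(A*(2*W*V))"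
      unfolding s2 m2 by (rule g1) (use pw in simp)
    show ?thesis unfolding e1 e2 add_divide_distrib[symmetric] by (simp add: algebra_simps)
  qed
  have EQ: "1 * ln (W + t*V) + ((B/(2*W) + t*(-B/(2*V))) / (W + t*V)) * (1+\<alpha>) +
        (-1 * ln (V + t*W) + ((-B/(2*V) + t*(B/(2*W))) / (V + t*W)) * (1-\<alpha>))
        = ln (W + t*V) - ln (V + t*W)" (is "?E = _") using Z by (simp add: algebra_simps)
  note F' = F[unfolded W_def[symmetric] V_def[symmetric]]
  have "?E = 1 * ln (W + t*V) + ((B/(2*W) + t*(-B/(2*V))) / (W + t*V)) * (1+\<alpha>) +
        (-1 * ln (V + t*W) + ((-B/(2*V) + t*(B/(2*W))) / (V + t*W)) * (1-\<alpha>))" ..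
  show ?thesis using F' unfolding EQ unfolding W_def V_def .
qed

lemma ks_bound:
  fixes d :: nat and \<beta> t :: real
  assumes d: "d \<ge> 3" and b: "0 < \<beta>" "\<beta> < beta_KS d" and t: "t = exp (-\<beta>)"
  shows "real (d-1) * ((1-t)/(1+t))^2 < 1"
proof -
  define s where "s = sqrt (real d - 1)"
  have s2: "s^2 = real d - 1" using d by (simp add: s_def)
  have s1: "s > 1" using d by (simp add: s_def)
  have X0: "(s+1)/(s-1) > 0" using s1 by simp
  have "exp \<beta> < exp (ln ((s+1)/(s-1)))"
    using b(2) unfolding beta_KS_def s_def[symmetric] by simp
  then have eb: "exp \<beta> < (s+1)/(s-1)" using X0 by simp
  have t0': "t > 0" using t by simp
  from eb have e1: "exp \<beta> * (s-1) < s+1" using s1 by (simp add: field_simps)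
  have e2: "t * exp \<beta> = 1" unfolding t by (simp add: exp_minus)
  have ts: "s - 1 < t*(s+1)"
  proof -
    have "t * (exp \<beta> * (s-1)) < t * (s+1)" using e1 t0' by simp
    then show ?thesis using e2 by (simp add: mult.assoc[symmetric])
  qed
  have t0: "0 < t" "t < 1" using t b by auto
  have q0: "(1-t)/(1+t) > 0" using t0 by simp
  have q1: "(1-t)/(1+t) < 1/s" using ts s1 t0 by (simp add: field_simps)
  have "((1-t)/(1+t))^2 < (1/s)^2" using q0 q1 by (intro power_strict_mono) auto
  then have "real (d-1) * ((1-t)/(1+t))^2 < real (d-1) * (1/s)^2"
    using d by (intro mult_strict_left_mono) auto
  also have "\<dots> = 1" using s2 d s1 by (simp add: power_divide of_nat_diff)
  finally show ?thesis .
qed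

theorem lemma8p3:
  fixes d :: nat and \<beta> :: real
  assumes "d \<ge> 3" and "0 < \<beta>" and "\<beta> < beta_KS d"
  shows "{\<alpha> \<in> {-1<..<1}. \<forall>\<alpha>' \<in> {-1<..<1}. fd d \<alpha>' \<beta> \<le> fd d \<alpha> \<beta>} = {0}"
proof -
  define t where "t = exp (-\<beta>)"
  have t0: "0 < t" "t < 1" using assms(2) by (auto simp: t_def)
  define A where "A = 1 + t^2"
  define B where "B = 1 - t^2"
  define w where "w = (\<lambda>x. sqrt (A + x*B))"
  define v where "v = (\<lambda>x. sqrt (A - x*B))"
  define h where "h = (\<lambda>x. - ((1+x)*ln(1+x) + (1-x)*ln(1-x))/2
      + real d/2 * ((1+x)*ln(w x + t*v x) + (1-x)*ln(v x + t*w x)))"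
  define h' where "h' = (\<lambda>x. - (ln(1+x) - ln(1-x))/2 + real d/2 * (ln(w x + t*v x) - ln(v x + t*w x)))"
  define K where "K = 2*ln 2 - real d/2*(2*ln 2 + ln A)"
  have A0: "A > 0" and B0: "B > 0" using t0 by (auto simp: A_def B_def power_less_one_iff add_pos_nonneg)
  have AB: "A > B" using t0 by (simp add: A_def B_def)
  have fdeq: "fd d x \<beta> = K + h x" if x: "-1 < x" "x < 1" for x
  proof -
    have G: "Gfun x \<beta> = 2*ln 2 + ln A - ((1+x)*ln(w x + t*v x) + (1-x)*ln(v x + t*w x))"
      using G_eq[OF t_def assms(2) x] unfolding A_def B_def w_def v_def by simp
    have l1: "ln ((1+x)/2) = ln (1+x) - ln 2" using x by (simp add: ln_div)
    have l2: "1 - (1+x)/2 = (1-x)/2" by (simp add: field_simps)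
    have l3: "ln ((1-x)/2) = ln (1-x) - ln 2" using x by (simp add: ln_div)
    show ?thesis unfolding fd_def binent_def G l2 l1 l3 h_def K_def
      by (simp add: field_simps)
  qed
  have hder: "(h has_real_derivative h' x) (at x)" if x: "-1 < x" "x < 1" for x
  proof -
    have D1: "((\<lambda>x. (1+x)*ln(1+x)) has_real_derivative ln(1+x) + 1) (at x)"
      using x by (auto intro!: derivative_eq_intros)
    have D2: "((\<lambda>x. (1-x)*ln(1-x)) has_real_derivative -ln(1-x) - 1) (at x)"
      using x by (auto intro!: derivative_eq_intros)
    have D3: "((\<lambda>x. (1+x)*ln(w x + t*v x) + (1-x)*ln(v x + t*w x)) has_real_derivative
           (ln(w x + t*v x) - ln(v x + t*w x))) (at x)"
      using chi_deriv[OF t0 x] unfolding w_def v_def A_def B_def by simp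
    have "(h has_real_derivative -((ln(1+x) + 1) + (-ln(1-x) - 1))/2 + real d/2 * (ln(w x + t*v x) - ln(v x + t*w x))) (at x)"
      unfolding h_def
      by (intro DERIV_add DERIV_cmult DERIV_cdivide DERIV_minus D1 D2 D3) 
    then show ?thesis unfolding h'_def by (simp add: algebra_simps)
  qed
  have hneg: "h' x < 0" if x: "0 < x" "x < 1" for x
  proof -
    define W where "W = w x"
    define V where "V = v x"
    have xb: "x*B < B" "x*B > 0" using x B0 by simp_all
    then have ap: "A + x*B > 0" "A - x*B > 0" using AB B0 by linarith+
    have W2: "W^2 = A + x*B" and V2: "V^2 = A - x*B" using ap by (simp_all add: w_def v_def W_def V_def)
    have W0: "W > 0" and V0: "V > 0" using ap by (simp_all add: w_def v_def W_def V_def)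
    have VW: "V < W" unfolding W_def V_def w_def v_def using x B0 by simp
    have m1: "(W - t*V)*(W + t*V) = A*B*(1+x)"
    proof -
      have "(W - t*V)*(W + t*V) = W^2 - t^2*V^2" by (simp add: algebra_simps power2_eq_square)
      also have "\<dots> = A*B*(1+x)" unfolding W2 V2 A_def B_def by (simp add: algebra_simps power2_eq_square)
      finally show ?thesis .
    qed
    have m2: "(V - t*W)*(V + t*W) = A*B*(1-x)"
    proof -
      have "(V - t*W)*(V + t*W) = V^2 - t^2*W^2" by (simp add: algebra_simps power2_eq_square)
      also have "\<dots> = A*B*(1-x)" unfolding W2 V2 A_def B_def by (simp add: algebra_simps power2_eq_square)
      finally show ?thesis .
    qed
    have pw: "W + t*V > 0" "V + t*W > 0" using W0 V0 t0 by (simp_all add: add_pos_pos)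
    have pos1: "A*B*(1+x) > 0" "A*B*(1-x) > 0" using A0 B0 x by simp_all
    have mw: "W - t*V > 0" using m1 pos1(1) pw(1) by (metis zero_less_mult_pos2)
    have mv: "V - t*W > 0" using m2 pos1(2) pw(2) by (metis zero_less_mult_pos2)
    have l1: "ln (1+x) = ln (W - t*V) + ln (W + t*V) - ln A - ln B"
    proof -
      have "ln (A*B*(1+x)) = ln A + ln B + ln (1+x)" using A0 B0 x by (simp add: ln_mult)
      moreover have "ln ((W - t*V)*(W + t*V)) = ln (W - t*V) + ln (W + t*V)" using mw pw by (simp add: ln_mult)
      ultimately show ?thesis using m1 by simp
    qed
    have l2: "ln (1-x) = ln (V - t*W) + ln (V + t*W) - ln A - ln B"
    proof -
      have "ln (A*B*(1-x)) = ln A + ln B + ln (1-x)" using A0 B0 x by (simp add: ln_mult)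
      moreover have "ln ((V - t*W)*(V + t*W)) = ln (V - t*W) + ln (V + t*W)" using mv pw by (simp add: ln_mult)
      ultimately show ?thesis using m2 by simp
    qed
    have ks: "real (d-1) * ((1-t)/(1+t))^2 < 1" by (rule ks_bound[OF assms t_def])
    have rs: "((W+t*V)/(V+t*W))^(d-1) < (W-t*V)/(V-t*W)"
      by (rule rho_sigma[OF t0 V0 VW _ ks]) (use mv in simp)
    have rp: "((W+t*V)/(V+t*W))^(d-1) > 0" using pw by simp
    have "ln (((W+t*V)/(V+t*W))^(d-1)) < ln ((W-t*V)/(V-t*W))"
      using rs rp by simp
    then have key: "real (d-1) * (ln (W+t*V) - ln (V+t*W)) < ln (W-t*V) - ln (V-t*W)"
      using pw mw mv by (simp add: ln_realpow ln_div)
    have dd: "real (d-1) = real d - 1" using assms(1) by (simp add: of_nat_diff)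
    have "h' x = (real (d-1) * (ln (W+t*V) - ln (V+t*W)) - (ln (W-t*V) - ln (V-t*W)))/2"
      unfolding h'_def l1 l2 dd W_def[symmetric] V_def[symmetric] by (simp add: field_simps)
    then show ?thesis using key by simp
  qed
  have dec: "h x < h 0" if x: "0 < x" "x < 1" for x
  proof (rule DERIV_neg_imp_decreasing_open[OF x(1)])
    show "\<exists>y. (h has_real_derivative y) (at z) \<and> y < 0" if "0 < z" "z < x" for z
      using hder[of z] hneg[of z] that x by auto
    show "continuous_on {0..x} h"
    proof (rule DERIV_atLeastAtMost_imp_continuous_on)
      fix z assume "0 \<le> z" "z \<le> x"
      then have "-1 < z" "z < 1" using x by auto
      then show "\<exists>y. (h has_real_derivative y) (at z)" using hder by blast
    qed
  qed
  have even: "h (-x) = h x" for x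
    unfolding h_def w_def v_def by (simp add: algebra_simps)
  have lt: "fd d x \<beta> < fd d 0 \<beta>" if x: "-1 < x" "x < 1" "x \<noteq> 0" for x
  proof (cases "x > 0")
    case True
    then show ?thesis using fdeq[of x] fdeq[of 0] dec[of x] x by simp
  next
    case False
    then have "-x > 0" using x by simp
    then have "h (-x) < h 0" using dec[of "-x"] x by simp
    then show ?thesis using fdeq[of x] fdeq[of 0] x even[of x] by simp
  qed
  show ?thesis
  proof (rule set_eqI, rule iffI)
    fix a assume "a \<in> {\<alpha> \<in> {-1<..<1}. \<forall>\<alpha>' \<in> {-1<..<1}. fd d \<alpha>' \<beta> \<le> fd d \<alpha> \<beta>}"
    then have a: "-1 < a" "a < 1" "fd d 0 \<beta> \<le> fd d a \<beta>" by auto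
    show "a \<in> {0}" using lt[of a] a by fastforce
  next
    fix a assume "a \<in> {0::real}"
    then show "a \<in> {\<alpha> \<in> {-1<..<1}. \<forall>\<alpha>' \<in> {-1<..<1}. fd d \<alpha>' \<beta> \<le> fd d \<alpha> \<beta>}"
      using lt by (force simp: less_imp_le)
  qed
qed

end
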